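(* Let $n\ge1$ and let $P_4(x,y;n)$ be the polynomial defined below. If $u,v$ are nonnegative integers with $u+v\le n-1$, then $P_4(-u,-v;n)=0$.
   Context: $E(x,y;n):=\det_{0\le i,j\le n-1}\left(\frac{(x+y+i+j-1)!\,(y-x+3j-3i)}{(x+2i-j+1)!\,(y+2j-i+1)!}\right)$, with $1/k!:=0$ for negative integers $k$; $(a)_k:=a(a+1)\cdots(a+k-1)$, $(a)_0:=1$. $P_4(x,y;n)$ denotes the (unique) polynomial in $x,y$ such that for all nonnegative integers $x,y$ with $x+y\ge1$: $E(x,y;n)=\prod_{i=0}^{n-1}\frac{(x+y+i-1)!\,(2x+y+2i+1)_i\,(x+2y+2i+1)_i}{(x+2i+1)!\,(y+2i+1)!}\cdot P_4(x,y;n)$ (such a polynomial exists). *)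

theory Defs
  imports Main "Jordan_Normal_Form.Determinant"
begin

definition inv_fact :: "int \<Rightarrow> real" where
  "inv_fact k = (if k < 0 then 0 else 1 / fact (nat k))"

text \<open>Matrix entry (i,j) of the determinant E(x,y;n), for nonnegative integers x,y with x+y \<ge> 1
  (so that (x+y+i+j-1)! is a factorial of a nonnegative integer).\<close>
definition E_entry :: "nat \<Rightarrow> nat \<Rightarrow> nat \<Rightarrow> nat \<Rightarrow> real" where
  "E_entry x y i j =
     fact (nat (int x + int y + int i + int j - 1))
     * (real_of_int (int y - int x + 3 * int j - 3 * int i))
     * inv_fact (int x + 2 * int i - int j + 1)
     * inv_fact (int y + 2 * int j - int i + 1)"

definition E :: "nat \<Rightarrow> nat \<Rightarrow> nat \<Rightarrow> real" where
  "E x y n = det (mat n n (\<lambda>(i, j). E_entry x y i j))"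

definition E_prefactor :: "nat \<Rightarrow> nat \<Rightarrow> nat \<Rightarrow> real" where
  "E_prefactor x y n =
     (\<Prod>i<n. fact (x + y + i - 1)
              * pochhammer (real (2 * x + y + 2 * i + 1)) i
              * pochhammer (real (x + 2 * y + 2 * i + 1)) i
              / (fact (x + 2 * i + 1) * fact (y + 2 * i + 1)))"

definition bivariate_polynomial :: "(real \<Rightarrow> real \<Rightarrow> real) \<Rightarrow> bool" where
  "bivariate_polynomial f \<longleftrightarrow>
     (\<exists>N c. \<forall>x y. f x y = (\<Sum>i\<le>N. \<Sum>j\<le>N. c i j * x ^ i * y ^ j))"

end

theory Submission
  imports Defs "HOL-Computational_Algebra.Polynomial"
begin

definition polyfun :: "(real \<Rightarrow> real) \<Rightarrow> bool" where
  "polyfun f \<longleftrightarrow> (\<exists>p. \<forall>x. f x = poly p x)"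

lemma polyfun_const[intro]: "polyfun (\<lambda>x. c)"
  unfolding polyfun_def by (rule exI[of _ "[:c:]"]) simp

lemma polyfun_id[intro]: "polyfun (\<lambda>x. x)"
  unfolding polyfun_def by (rule exI[of _ "[:0,1:]"]) simp

lemma polyfun_add[intro]: "polyfun f \<Longrightarrow> polyfun g \<Longrightarrow> polyfun (\<lambda>x. f x + g x)"
  unfolding polyfun_def by (metis poly_add)

lemma polyfun_mult[intro]: "polyfun f \<Longrightarrow> polyfun g \<Longrightarrow> polyfun (\<lambda>x. f x * g x)"
  unfolding polyfun_def by (metis poly_mult)

lemma polyfun_diff[intro]: "polyfun f \<Longrightarrow> polyfun g \<Longrightarrow> polyfun (\<lambda>x. f x - g x)"
  unfolding polyfun_def by (metis poly_diff)

lemma polyfun_uminus[intro]: "polyfun f \<Longrightarrow> polyfun (\<lambda>x. - f x)"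
  unfolding polyfun_def by (metis poly_minus)

lemma polyfun_sum[intro]: "(\<And>i. i \<in> A \<Longrightarrow> polyfun (f i)) \<Longrightarrow> polyfun (\<lambda>x. \<Sum>i\<in>A. f i x)"
proof (induction A rule: infinite_finite_induct)
  case (insert a A) then show ?case by (simp add: polyfun_add)
qed auto

lemma polyfun_prod[intro]: "(\<And>i. i \<in> A \<Longrightarrow> polyfun (f i)) \<Longrightarrow> polyfun (\<lambda>x. \<Prod>i\<in>A. f i x)"
proof (induction A rule: infinite_finite_induct)
  case (insert a A) then show ?case by (simp add: polyfun_mult)
qed auto

lemma polyfun_power[intro]: "polyfun f \<Longrightarrow> polyfun (\<lambda>x. f x ^ k)"
by (induction k) (auto simp: polyfun_mult)

lemma polyfun_pochhammer[intro]: "polyfun f \<Longrightarrow> polyfun (\<lambda>x. pochhammer (f x) k)"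
  unfolding pochhammer_prod by (intro polyfun_prod polyfun_add polyfun_const) auto

lemma polyfun_zero_nat:
  assumes "polyfun f" "\<And>n::nat. n \<ge> 1 \<Longrightarrow> f (real n) = 0"
  shows "f z = 0"
proof -
  obtain p where p: "\<And>x. f x = poly p x" using assms(1) unfolding polyfun_def by blast
  have sub: "real ` {1..} \<subseteq> {x. poly p x = 0}" using assms(2) p by auto
  have "infinite {1::nat..}" by (simp add: infinite_Ici)
  then have "infinite (real ` {1::nat..})"
    using finite_imageD inj_on_def by (metis of_nat_eq_iff)
  then have "infinite {x. poly p x = 0}" using sub infinite_super by blast
  then have "p = 0" using poly_roots_finite by blast
  then show ?thesis using p by simp
qed
definition dvt :: "nat \<Rightarrow> (real \<Rightarrow> real) \<Rightarrow> bool" where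
  "dvt k f \<longleftrightarrow> (\<exists>q. \<forall>t. f t = t ^ k * poly q t)"

definition ext :: "nat \<Rightarrow> (real \<Rightarrow> real) \<Rightarrow> bool" where
  "ext k f \<longleftrightarrow> (\<exists>q. (\<forall>t. f t = t ^ k * poly q t) \<and> poly q 0 \<noteq> 0)"

lemma dvt_mult: "dvt a f \<Longrightarrow> dvt b g \<Longrightarrow> dvt (a + b) (\<lambda>t. f t * g t)"
  unfolding dvt_def
proof (elim exE)
  fix p q assume p: "\<forall>t. f t = t ^ a * poly p t" and q: "\<forall>t. g t = t ^ b * poly q t"
  show "\<exists>r. \<forall>t. f t * g t = t ^ (a + b) * poly r t"
    by (rule exI[of _ "p * q"]) (simp add: p q power_add)
qed

lemma ext_mult: "ext a f \<Longrightarrow> ext b g \<Longrightarrow> ext (a + b) (\<lambda>t. f t * g t)"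
  unfolding ext_def
proof (elim exE conjE)
  fix p q assume p: "\<forall>t. f t = t ^ a * poly p t" "poly p 0 \<noteq> 0"
    and q: "\<forall>t. g t = t ^ b * poly q t" "poly q 0 \<noteq> 0"
  show "\<exists>r. (\<forall>t. f t * g t = t ^ (a + b) * poly r t) \<and> poly r 0 \<noteq> 0"
    by (rule exI[of _ "p * q"]) (simp add: p q power_add)
qed

lemma dvt_one: "dvt 0 (\<lambda>t. 1)"
  unfolding dvt_def by (rule exI[of _ "[:1:]"]) simp

lemma ext_one: "ext 0 (\<lambda>t. 1)"
  unfolding ext_def by (rule exI[of _ "[:1:]"]) simp

lemma dvt_prod: "(\<And>i. i \<in> A \<Longrightarrow> dvt (k i) (f i)) \<Longrightarrow> dvt (\<Sum>i\<in>A. k i) (\<lambda>t. \<Prod>i\<in>A. f i t)"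
proof (induction A rule: infinite_finite_induct)
  case (insert a A) then show ?case by (simp add: dvt_mult)
qed (auto simp: dvt_one)

lemma ext_prod: "(\<And>i. i \<in> A \<Longrightarrow> ext (k i) (f i)) \<Longrightarrow> ext (\<Sum>i\<in>A. k i) (\<lambda>t. \<Prod>i\<in>A. f i t)"
proof (induction A rule: infinite_finite_induct)
  case (insert a A) then show ?case by (simp add: ext_mult)
qed (auto simp: ext_one)

lemma dvt_mono: "dvt k f \<Longrightarrow> j \<le> k \<Longrightarrow> dvt j f"
  unfolding dvt_def
proof (elim exE)
  fix q assume q: "\<forall>t. f t = t ^ k * poly q t" and jk: "j \<le> k"
  show "\<exists>r. \<forall>t. f t = t ^ j * poly r t"
    by (rule exI[of _ "monom 1 (k - j) * q"])
      (simp add: q poly_monom power_add[symmetric] jk)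
qed

lemma dvt_add: "dvt k f \<Longrightarrow> dvt k g \<Longrightarrow> dvt k (\<lambda>t. f t + g t)"
  unfolding dvt_def
proof (elim exE)
  fix p q assume p: "\<forall>t. f t = t ^ k * poly p t" and q: "\<forall>t. g t = t ^ k * poly q t"
  show "\<exists>r. \<forall>t. f t + g t = t ^ k * poly r t"
    by (rule exI[of _ "p + q"]) (simp add: p q algebra_simps)
qed

lemma dvt_zero: "dvt k (\<lambda>t. 0)"
  unfolding dvt_def by (rule exI[of _ 0]) simp

lemma dvt_sum: "(\<And>i. i \<in> A \<Longrightarrow> dvt k (f i)) \<Longrightarrow> dvt k (\<lambda>t. \<Sum>i\<in>A. f i t)"
proof (induction A rule: infinite_finite_induct)
  case (insert a A) then show ?case by (simp add: dvt_add)
qed (auto simp: dvt_zero)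

lemma dvt_polyfun: "polyfun f \<Longrightarrow> dvt 0 f"
  unfolding dvt_def polyfun_def by simp

lemma dvt_lin: "dvt (if a = 0 then 1 else 0) (\<lambda>t. s * t + a)"
  unfolding dvt_def
  by (cases "a = 0") (rule exI[of _ "[:s:]"], simp, rule exI[of _ "[:a, s:]"], simp)

lemma ext_lin: "s \<noteq> 0 \<Longrightarrow> ext (if a = 0 then 1 else 0) (\<lambda>t. s * t + a)"
  unfolding ext_def
  by (cases "a = 0") (rule exI[of _ "[:s:]"], simp, rule exI[of _ "[:a, s:]"], simp)

lemma ext_dvt_final:
  assumes P: "polyfun P" and g: "ext N g" and h: "dvt (Suc N) h"
    and eq: "\<And>t. P t * g t = h t"
  shows "P 0 = 0"
proof -
  obtain pp where pp: "\<And>t. P t = poly pp t" using P unfolding polyfun_def by blast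
  obtain qg where qg: "\<And>t. g t = t ^ N * poly qg t" "poly qg 0 \<noteq> 0" using g unfolding ext_def by blast
  obtain qh where qh: "\<And>t. h t = t ^ Suc N * poly qh t" using h unfolding dvt_def by blast
  have "poly (pp * qg - [:0,1:] * qh) t = 0" if "t \<noteq> 0" for t
  proof -
    have "t ^ N * (P t * poly qg t) = t ^ N * (t * poly qh t)"
      using eq[of t] qg(1)[of t] qh[of t] by (simp add: algebra_simps)
    then have "P t * poly qg t = t * poly qh t" using that by simp
    then show ?thesis by (simp add: pp)
  qed
  then have "{t. t \<noteq> 0} \<subseteq> {t. poly (pp * qg - [:0,1:] * qh) t = 0}" by auto
  moreover have "infinite {t::real. t \<noteq> 0}"
  proof
    assume "finite {t::real. t \<noteq> 0}"
    then have "finite (insert 0 {t::real. t \<noteq> 0})" by simp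
    moreover have "insert 0 {t::real. t \<noteq> 0} = UNIV" by auto
    ultimately show False by (simp add: infinite_UNIV_char_0)
  qed
  ultimately have "infinite {t. poly (pp * qg - [:0,1:] * qh) t = 0}" using infinite_super by blast
  then have "pp * qg - [:0,1:] * qh = 0" using poly_roots_finite by blast
  then have "poly (pp * qg) 0 = poly ([:0,1:] * qh) 0" by (metis eq_iff_diff_eq_0)
  then show ?thesis using qg(2) pp by simp
qed

definition ffr :: "real \<Rightarrow> nat \<Rightarrow> real" where
  "ffr a j = (\<Prod>k<j. a - real k)"

definition Mr :: "real \<Rightarrow> real \<Rightarrow> nat \<Rightarrow> nat \<Rightarrow> real" where
  "Mr x y i j = pochhammer (x + y + real i) j * ffr (x + 2 * real i + 1) j
      * ffr (y + 2 * real j + 1) i * (y - x + 3 * real j - 3 * real i)"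

definition Dr :: "real \<Rightarrow> real \<Rightarrow> nat \<Rightarrow> real" where
  "Dr x y n = (\<Sum>p\<in>{p. p permutes {0..<n}}. of_int (sign p) * (\<Prod>i=0..<n. Mr x y i (p i)))"

definition G2 :: "real \<Rightarrow> real \<Rightarrow> nat \<Rightarrow> real" where
  "G2 x y n = (\<Prod>i<n. pochhammer (2 * x + y + 2 * real i + 1) i * pochhammer (x + 2 * y + 2 * real i + 1) i)"

lemma fact_add_poch: "(fact (m + j) :: real) = fact m * pochhammer (real m + 1) j"
  by (induction j) (auto simp: pochhammer_Suc algebra_simps)

lemma ffr_nat: "ffr (real a) j = (if j \<le> a then fact a / fact (a - j) else 0)"
proof (induction j)
  case 0 then show ?case by (simp add: ffr_def)
next
  case (Suc j)
  have s: "ffr (real a) (Suc j) = ffr (real a) j * (real a - real j)" by (simp add: ffr_def)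
  show ?case
  proof (cases "Suc j \<le> a")
    case True
    then have f: "(fact (a - j) :: real) = real (a - j) * fact (a - Suc j)"
      by (metis Suc_diff_Suc Suc_le_lessD fact_Suc of_nat_Suc diff_Suc_Suc)
    have r: "real (a - j) = real a - real j" using True by simp
    have ih: "ffr (real a) j = fact a / fact (a - j)" using Suc True by simp
    have pos: "(fact (a - Suc j) :: real) \<noteq> 0" "real (a - j) \<noteq> 0" using True by auto
    have "ffr (real a) (Suc j) = fact a / (real (a - j) * fact (a - Suc j)) * real (a - j)"
      using s ih f r by simp
    also have "\<dots> = fact a / fact (a - Suc j)" using pos by (simp add: field_simps)
    finally show ?thesis using True by simp
  next
    case False
    then show ?thesis using Suc s by (cases "j = a") auto
  qed
qed

lemma inv_fact_ffr: "inv_fact (int a - int j) = ffr (real a) j / fact a"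
  by (auto simp: inv_fact_def ffr_nat nat_diff_distrib)

lemma E_entry_eq:
  assumes "x + y \<ge> 1"
  shows "E_entry x y i j = (fact (x + y + i - 1) / fact (x + 2 * i + 1)) * (1 / fact (y + 2 * j + 1))
           * Mr (real x) (real y) i j"
proof -
  have n: "nat (int x + int y + int i + int j - 1) = (x + y + i - 1) + j" using assms by linarith
  have f1: "(fact (nat (int x + int y + int i + int j - 1)) :: real) =
      fact (x + y + i - 1) * pochhammer (real x + real y + real i) j"
    unfolding n fact_add_poch using assms by (simp add: of_nat_diff)
  have i1: "inv_fact (int x + 2 * int i - int j + 1) = ffr (real x + 2 * real i + 1) j / fact (x + 2 * i + 1)"
    using inv_fact_ffr[of "x + 2 * i + 1" j] by (simp add: algebra_simps)
  have i2: "inv_fact (int y + 2 * int j - int i + 1) = ffr (real y + 2 * real j + 1) i / fact (y + 2 * j + 1)"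
    using inv_fact_ffr[of "y + 2 * j + 1" i] by (simp add: algebra_simps)
  show ?thesis
    unfolding E_entry_def f1 i1 i2 Mr_def by (simp add: field_simps)
qed

lemma det_mat_expand:
  "det (mat n n f) = (\<Sum>p\<in>{p. p permutes {0..<n}}. of_int (sign p) * (\<Prod>i=0..<n. f (i, p i)))"
  unfolding det_def
  by (auto intro!: sum.cong prod.cong simp: permutes_in_image)

lemma E_grid:
  assumes "x + y \<ge> 1"
  shows "E x y n = (\<Prod>i=0..<n. fact (x + y + i - 1) / fact (x + 2 * i + 1))
     * (\<Prod>j=0..<n. 1 / fact (y + 2 * j + 1)) * Dr (real x) (real y) n"
proof -
  let ?r = "\<lambda>i. (fact (x + y + i - 1) / fact (x + 2 * i + 1) :: real)"
  let ?c = "\<lambda>j. (1 / fact (y + 2 * j + 1) :: real)"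
  have "E x y n = (\<Sum>p\<in>{p. p permutes {0..<n}}. of_int (sign p) *
      (\<Prod>i=0..<n. ?r i * ?c (p i) * Mr (real x) (real y) i (p i)))"
    unfolding E_def det_mat_expand using E_entry_eq[OF assms] by simp
  also have "\<dots> = (\<Sum>p\<in>{p. p permutes {0..<n}}. (\<Prod>i=0..<n. ?r i) * (\<Prod>j=0..<n. ?c j) *
      (of_int (sign p) * (\<Prod>i=0..<n. Mr (real x) (real y) i (p i))))"
  proof (rule sum.cong[OF refl])
    fix p assume "p \<in> {p. p permutes {0..<n}}"
    then have pp: "p permutes {0..<n}" by simp
    have "(\<Prod>j=0..<n. ?c j) = (\<Prod>i=0..<n. ?c (p i))"
      using prod.permute[OF pp, of ?c] by (simp add: comp_def)
    then show "of_int (sign p) * (\<Prod>i=0..<n. ?r i * ?c (p i) * Mr (real x) (real y) i (p i)) =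
      (\<Prod>i=0..<n. ?r i) * (\<Prod>j=0..<n. ?c j) * (of_int (sign p) * (\<Prod>i=0..<n. Mr (real x) (real y) i (p i)))"
    proof -
      have "(\<Prod>i=0..<n. ?r i * ?c (p i) * Mr (real x) (real y) i (p i)) =
        (\<Prod>i=0..<n. ?r i) * (\<Prod>i=0..<n. ?c (p i)) * (\<Prod>i=0..<n. Mr (real x) (real y) i (p i))"
        by (simp only: prod.distrib)
      then show ?thesis using \<open>(\<Prod>j=0..<n. ?c j) = (\<Prod>i=0..<n. ?c (p i))\<close>
        by (simp only: ac_simps)
    qed
  qed
  also have "\<dots> = (\<Prod>i=0..<n. ?r i) * (\<Prod>j=0..<n. ?c j) * Dr (real x) (real y) n"
    unfolding Dr_def by (simp add: sum_distrib_left)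
  finally show ?thesis .
qed

lemma prefactor_grid:
  assumes "x + y \<ge> 1"
  shows "E_prefactor x y n = (\<Prod>i=0..<n. fact (x + y + i - 1) / fact (x + 2 * i + 1))
     * (\<Prod>j=0..<n. 1 / fact (y + 2 * j + 1)) * G2 (real x) (real y) n"
proof -
  have "E_prefactor x y n = (\<Prod>i=0..<n. (fact (x + y + i - 1) / fact (x + 2 * i + 1))
     * (1 / fact (y + 2 * i + 1)) * (pochhammer (2 * real x + real y + 2 * real i + 1) i
       * pochhammer (real x + 2 * real y + 2 * real i + 1) i))"
    unfolding E_prefactor_def atLeast0LessThan by (intro prod.cong refl) (simp add: field_simps)
  then show ?thesis unfolding G2_def atLeast0LessThan by (simp only: prod.distrib[symmetric])
qed

lemma grid_identity:
  assumes "x + y \<ge> 1" "E x y n = E_prefactor x y n * P (real x) (real y)"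
  shows "Dr (real x) (real y) n = G2 (real x) (real y) n * P (real x) (real y)"
proof -
  let ?R = "(\<Prod>i=0..<n. fact (x + y + i - 1) / fact (x + 2 * i + 1)) * (\<Prod>j=0..<n. 1 / fact (y + 2 * j + 1)) :: real"
  have "?R \<noteq> 0" by simp
  moreover have "?R * Dr (real x) (real y) n = ?R * (G2 (real x) (real y) n * P (real x) (real y))"
    using assms E_grid[OF assms(1), of n] prefactor_grid[OF assms(1), of n] by (simp add: ac_simps)
  ultimately show ?thesis by simp
qed

lemma polyfun_cong: "(\<And>x. f x = g x) \<Longrightarrow> polyfun g \<Longrightarrow> polyfun f"
  by (metis ext)

lemma ffr_polyfun[intro]: "polyfun f \<Longrightarrow> polyfun (\<lambda>x. ffr (f x) j)"
  unfolding ffr_def by (intro polyfun_prod polyfun_diff polyfun_const) auto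

lemma Mr_polyfun_x: "polyfun (\<lambda>x. Mr x y i j)"
  unfolding Mr_def by (intro polyfun_mult polyfun_pochhammer ffr_polyfun polyfun_add polyfun_diff polyfun_const polyfun_id)

lemma Mr_polyfun_y: "polyfun (\<lambda>y. Mr x y i j)"
  unfolding Mr_def by (intro polyfun_mult polyfun_pochhammer ffr_polyfun polyfun_add polyfun_diff polyfun_const polyfun_id)

lemma Dr_polyfun_x: "polyfun (\<lambda>x. Dr x y n)"
  unfolding Dr_def by (intro polyfun_sum polyfun_mult polyfun_prod polyfun_const Mr_polyfun_x)

lemma Dr_polyfun_y: "polyfun (\<lambda>y. Dr x y n)"
  unfolding Dr_def by (intro polyfun_sum polyfun_mult polyfun_prod polyfun_const Mr_polyfun_y)

lemma G2_polyfun_x: "polyfun (\<lambda>x. G2 x y n)"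
  unfolding G2_def by (intro polyfun_prod polyfun_mult polyfun_pochhammer polyfun_add polyfun_const polyfun_id)

lemma G2_polyfun_y: "polyfun (\<lambda>y. G2 x y n)"
  unfolding G2_def by (intro polyfun_prod polyfun_mult polyfun_pochhammer polyfun_add polyfun_const polyfun_id)

lemma bivar_polyfun:
  assumes "bivariate_polynomial P" "polyfun fx" "polyfun fy"
  shows "polyfun (\<lambda>t. P (fx t) (fy t))"
proof -
  obtain N c where Pc: "\<And>x y. P x y = (\<Sum>i\<le>N. \<Sum>j\<le>N. c i j * x ^ i * y ^ j)"
    using assms(1) unfolding bivariate_polynomial_def by blast
  show ?thesis
    by (rule polyfun_cong[OF Pc]) (intro polyfun_sum polyfun_mult polyfun_power polyfun_const assms(2,3))
qed

lemma extend:
  assumes PP: "bivariate_polynomial P"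
    and grid: "\<And>x y :: nat. x + y \<ge> 1 \<Longrightarrow> Dr (real x) (real y) n = G2 (real x) (real y) n * P (real x) (real y)"
  shows "Dr x y n = G2 x y n * P x y"
proof -
  have step1: "Dr x (real m) n = G2 x (real m) n * P x (real m)" if m: "m \<ge> 1" for x m
  proof -
    have "polyfun (\<lambda>x. Dr x (real m) n - G2 x (real m) n * P x (real m))"
      by (intro polyfun_diff polyfun_mult Dr_polyfun_x G2_polyfun_x bivar_polyfun[OF PP] polyfun_id polyfun_const)
    moreover have "Dr (real k) (real m) n - G2 (real k) (real m) n * P (real k) (real m) = 0" if "k \<ge> 1" for k
      using grid[of k m] m by simp
    ultimately have "Dr x (real m) n - G2 x (real m) n * P x (real m) = 0"
      by (rule polyfun_zero_nat)
    then show ?thesis by simp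
  qed
  have "polyfun (\<lambda>y. Dr x y n - G2 x y n * P x y)"
    by (intro polyfun_diff polyfun_mult Dr_polyfun_y G2_polyfun_y bivar_polyfun[OF PP] polyfun_id polyfun_const)
  moreover have "Dr x (real k) n - G2 x (real k) n * P x (real k) = 0" if "k \<ge> 1" for k
    using step1[of k x] that by simp
  ultimately have "Dr x y n - G2 x y n * P x y = 0" by (rule polyfun_zero_nat)
  then show ?thesis by simp
qed

lemma ext_cong: "(\<And>t. f t = g t) \<Longrightarrow> ext k g \<Longrightarrow> ext k f"
  by (metis ext)

lemma dvt_cong: "(\<And>t. f t = g t) \<Longrightarrow> dvt k g \<Longrightarrow> dvt k f"
  by (metis ext)

lemma ext_poch:
  assumes "s \<noteq> 0"
  shows "ext (\<Sum>k<m. if a + k = c then 1 else 0) (\<lambda>t. pochhammer (s * t + real a - real c) m)"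
proof -
  have "ext (\<Sum>k<m. if real (a + k) - real c = 0 then 1 else 0) (\<lambda>t. \<Prod>k<m. s * t + (real (a + k) - real c))"
    by (intro ext_prod ext_lin assms)
  moreover have "(\<lambda>k. if real (a + k) - real c = 0 then 1 else (0::nat)) = (\<lambda>k. if a + k = c then 1 else 0)"
    by (auto simp del: of_nat_add simp add: of_nat_eq_iff)
  moreover have "pochhammer (s * t + real a - real c) m = (\<Prod>k<m. s * t + (real (a + k) - real c))" for t
    unfolding pochhammer_prod atLeast0LessThan by (intro prod.cong refl) (simp add: algebra_simps)
  ultimately show ?thesis by (metis (no_types, lifting) ext_cong)
qed

lemma dvt_ffr:
  shows "dvt (\<Sum>k<m. if a = c + k then 1 else 0) (\<lambda>t. ffr (s * t + real a - real c) m)"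
proof -
  have "dvt (\<Sum>k<m. if real a - real (c + k) = 0 then 1 else 0) (\<lambda>t. \<Prod>k<m. s * t + (real a - real (c + k)))"
    by (intro dvt_prod dvt_lin)
  moreover have "(\<lambda>k. if real a - real (c + k) = 0 then 1 else (0::nat)) = (\<lambda>k. if a = c + k then 1 else 0)"
    by (auto simp del: of_nat_add simp add: of_nat_eq_iff)
  moreover have "ffr (s * t + real a - real c) m = (\<Prod>k<m. s * t + (real a - real (c + k)))" for t
    unfolding ffr_def by (intro prod.cong refl) (simp add: algebra_simps)
  ultimately show ?thesis by (metis (no_types, lifting) dvt_cong)
qed

definition NG :: "nat \<Rightarrow> nat \<Rightarrow> nat \<Rightarrow> nat" where
  "NG u v n = (\<Sum>i<n. (\<Sum>k<i. if 2 * i + 1 + k = 2 * u + v then 1 else 0)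
                   + (\<Sum>k<i. if 2 * i + 1 + k = u + 2 * v then 1 else 0))"

lemma G2_path_ext: "ext (NG u v n) (\<lambda>t. G2 (- real u + t) (- real v - t) n)"
proof -
  have "ext (NG u v n) (\<lambda>t. \<Prod>i<n. pochhammer (1 * t + real (2 * i + 1) - real (2 * u + v)) i
          * pochhammer ((-1) * t + real (2 * i + 1) - real (u + 2 * v)) i)"
    unfolding NG_def by (intro ext_prod ext_mult ext_poch) auto
  moreover have "G2 (- real u + t) (- real v - t) n = (\<Prod>i<n. pochhammer (1 * t + real (2 * i + 1) - real (2 * u + v)) i
          * pochhammer ((-1) * t + real (2 * i + 1) - real (u + 2 * v)) i)" for t
    unfolding G2_def by (intro prod.cong refl arg_cong2[where f="(*)"] arg_cong2[where f=pochhammer]) (auto simp: algebra_simps)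
  ultimately show ?thesis by (metis (no_types, lifting) ext_cong)
qed

lemma perm_antidiag:
  fixes n w :: nat
  assumes p: "p permutes {0..<n}" and wn: "w < n" and le: "\<And>i. i \<le> w \<Longrightarrow> p i \<le> w - i"
  shows "\<And>i. i \<le> w \<Longrightarrow> p i = w - i"
proof -
  have inj: "inj_on p {..w}" using permutes_inj[OF p] by (auto intro: inj_on_subset)
  have sub: "p ` {..w} \<subseteq> {..w}" proof (rule image_subsetI) fix i assume "i \<in> {..w}" then show "p i \<in> {..w}" using le[of i] by (meson atMost_iff diff_le_self le_trans) qed
  have img: "p ` {..w} = {..w}"
    by (rule card_subset_eq) (use sub card_image[OF inj] in auto)
  have s1: "(\<Sum>i\<le>w. p i) = (\<Sum>i\<le>w. i)"
    using sum.reindex[OF inj, of id] img by simp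
  have s2: "(\<Sum>i\<le>w. w - i) = (\<Sum>i\<le>w. i)"
    using sum.nat_diff_reindex[of id "Suc w"] by (simp add: lessThan_Suc_atMost)
  fix i assume i: "i \<le> w"
  show "p i = w - i"
  proof (rule ccontr)
    assume "p i \<noteq> w - i"
    then have "p i < w - i" using le[OF i] by simp
    then have "(\<Sum>i\<le>w. p i) < (\<Sum>i\<le>w. w - i)"
      using i le by (intro sum_strict_mono_ex1) auto
    then show False using s1 s2 by simp
  qed
qed

definition ecount :: "nat \<Rightarrow> nat \<Rightarrow> nat \<Rightarrow> nat" where
  "ecount u v i = (\<Sum>k<u + v - i. if 2 * i + 1 = u + k then 1 else 0)
     + (\<Sum>k<i. if 2 * (u + v - i) + 1 = v + k then 1 else 0)
     + (if u + 3 * (u + v - i) = v + 3 * i then 1 else 0)"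

lemma antidiag_entry:
  assumes "i \<le> u + v"
  shows "dvt (ecount u v i) (\<lambda>t. Mr (- real u + t) (- real v - t) i (u + v - i))"
proof -
  let ?w = "u + v"
  have lin: "dvt (if u + 3 * (u + v - i) = v + 3 * i then 1 else 0)
       (\<lambda>t. (-2) * t + (real u - real v + 3 * real (u + v - i) - 3 * real i))"
  proof -
    have "(real u - real v + 3 * real (u + v - i) - 3 * real i = 0) = (u + 3 * (u + v - i) = v + 3 * i)"
      using assms by (simp add: of_nat_diff) linarith
    then show ?thesis using dvt_lin[of "real u - real v + 3 * real (u + v - i) - 3 * real i" "-2"] by simp
  qed
  have "dvt (0 + ecount u v i) (\<lambda>t. pochhammer (real i - real ?w) (?w - i) *
      (ffr (1 * t + real (2 * i + 1) - real u) (?w - i) * ffr ((-1) * t + real (2 * (?w - i) + 1) - real v) i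
       * ((-2) * t + (real u - real v + 3 * real (u + v - i) - 3 * real i))))"
    unfolding ecount_def
    by (intro dvt_mult dvt_polyfun polyfun_const dvt_ffr lin)
  moreover have "Mr (- real u + t) (- real v - t) i (u + v - i) =
     pochhammer (real i - real ?w) (?w - i) *
      (ffr (1 * t + real (2 * i + 1) - real u) (?w - i) * ffr ((-1) * t + real (2 * (?w - i) + 1) - real v) i
       * ((-2) * t + (real u - real v + 3 * real (u + v - i) - 3 * real i)))" for t
    unfolding Mr_def using assms
    by (simp add: of_nat_diff algebra_simps)
  ultimately show ?thesis by (metis (no_types, lifting) add_0 dvt_cong)
qed

lemma sum_ind_card: "finite A \<Longrightarrow> (\<Sum>i\<in>A. if P i then 1 else 0 :: nat) = card {i\<in>A. P i}"
  using sum.inter_filter[of A "\<lambda>_. (1::nat)" P] by simp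

lemma sum_delta_a:
  fixes a c m :: nat
  shows "(\<Sum>k<m. if a = c + k then 1 else 0 :: nat) = (if c \<le> a \<and> a - c < m then 1 else 0)"
proof -
  have "(\<Sum>k<m. if a = c + k then 1 else 0 :: nat) = (\<Sum>k<m. if c \<le> a \<and> k = a - c then 1 else 0)"
    by (intro sum.cong refl) auto
  also have "\<dots> = (if c \<le> a \<and> a - c < m then 1 else 0)"
    by (cases "c \<le> a") (auto simp: sum.delta')
  finally show ?thesis .
qed

lemma sum_delta_b:
  fixes a c m :: nat
  shows "(\<Sum>k<m. if a + k = c then 1 else 0 :: nat) = (if a \<le> c \<and> c - a < m then 1 else 0)"
proof -
  have "(\<Sum>k<m. if a + k = c then 1 else 0 :: nat) = (\<Sum>k<m. if c = a + k then 1 else 0)"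
    by (intro sum.cong refl) auto
  then show ?thesis by (simp add: sum_delta_a)
qed

lemma h3: "X = 3*m + k \<Longrightarrow> (X + j) div 3 = m + (k + j) div (3::nat)"
  by simp
lemma h2: "X = 2*m + k \<Longrightarrow> (X + j) div 2 = m + (k + j) div (2::nat)"
  by simp
lemma final_arith:
  fixes u v :: nat
  shows "((2*u+v+1) div 2 - (2*u+v+2) div 3) + ((u+2*v+1) div 2 - (u+2*v+2) div 3) + 1 \<le>
   ((2*u+v+1) div 3 - u div 2) + ((u+2*v+1) div 3 - v div 2) + (if 3 dvd (2*u+v) then 1 else 0)"
proof -
  define p r1 q r2 m k where "p = u div 2" "r1 = u mod 2" "q = v div 2" "r2 = v mod 2"
    "m = (2*u+v) div 3" "k = (2*u+v) mod 3"
  note defs = this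
  have u: "u = 2*p + r1" and v: "v = 2*q + r2" and X: "2*u+v = 3*m + k"
    unfolding defs by simp_all
  have r1: "r1 < 2" and r2: "r2 < 2" and k: "k < 3" unfolding defs by simp_all
  have ud: "u div 2 = p" and vd: "v div 2 = q" unfolding defs by simp_all
  have X1: "(2*u+v+1) div 2 = (2*p+q+r1) + (r2 + 1) div 2"
    using h2[of "2*u+v" "2*p+q+r1" r2 1] u v by (simp add: algebra_simps)
  have Y1: "(u+2*v+1) div 2 = (p+2*q+r2) + (r1 + 1) div 2"
    using h2[of "u+2*v" "p+2*q+r2" r1 1] u v by (simp add: algebra_simps)
  have X3a: "(2*u+v+1) div 3 = m + (k+1) div 3" using h3[OF X, of 1] by simp
  have X3b: "(2*u+v+2) div 3 = m + (k+2) div 3" using h3[OF X, of 2] by simp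
  have dv: "(3 dvd (2*u+v)) = (k = 0)" unfolding defs by presburger
  have Ysum: "(u + 2*v) + k = 3 * (u+v-m)" and mw: "m \<le> u + v" using X by linarith+
  have Y2: "(u+2*v+2) div 3 = u+v-m"
  proof -
    have "u+2*v+2 = 3*(u+v-m) + (2-k)" using Ysum k by arith
    then show ?thesis using k by simp
  qed
  have Y1': "(u+2*v+1) div 3 = u+v-m - (if k = 2 then 1 else 0)"
  proof (cases "k = 2")
    case True
    then have "u+2*v+1 = 3*(u+v-m-1) + 2" using Ysum by arith
    then show ?thesis using True by simp
  next
    case False
    then have "u+2*v+1 = 3*(u+v-m) + (1-k)" using Ysum k by arith
    then show ?thesis using False k by simp
  qed
  have "r1 \<in> {0,1}" "r2 \<in> {0,1}" "k \<in> {0,1,2}" using r1 r2 k by auto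
  then show ?thesis
    unfolding X1 Y1 X3a X3b dv Y2 Y1' ud vd
    using u v X mw by (elim insertE emptyE; simp; arith)
qed

lemma cntl1: "(u div 2 \<le> x) = (u \<le> 2 * x + 1)" for x u :: nat
  by presburger
lemma cntl2: "(x < (c + 1) div 3) = (3 * x + 2 \<le> c)" for x c :: nat
  by presburger
lemma cntl3: "(x < (c + 1) div 2) = (2 * x + 1 \<le> c)" for x c :: nat
  by presburger
lemma cntl4: "((c + 2) div 3 \<le> x) = (c \<le> 3 * x)" for x c :: nat
  by presburger

lemma count_ineq:
  assumes "u + v < n"
  shows "NG u v n + 1 \<le> (\<Sum>i\<le>u + v. ecount u v i)"
proof -
  let ?w = "u + v"
  let ?P1 = "\<lambda>i. u \<le> 2 * i + 1 \<and> 2 * i + 1 - u < ?w - i"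
  let ?P2 = "\<lambda>i. v \<le> 2 * (?w - i) + 1 \<and> 2 * (?w - i) + 1 - v < i"
  let ?P3 = "\<lambda>i. u + 3 * (?w - i) = v + 3 * i"
  let ?Q1 = "\<lambda>i. 2 * i + 1 \<le> 2 * u + v \<and> 2 * u + v - (2 * i + 1) < i"
  let ?Q2 = "\<lambda>i. 2 * i + 1 \<le> u + 2 * v \<and> u + 2 * v - (2 * i + 1) < i"
  have e: "ecount u v i = (if ?P1 i then 1 else 0) + (if ?P2 i then 1 else 0) + (if ?P3 i then 1 else 0)" for i
    by (simp add: ecount_def sum_delta_a)
  have ng: "NG u v n = (\<Sum>i<n. (if ?Q1 i then 1 else 0) + (if ?Q2 i then 1 else 0))"
    unfolding NG_def sum_delta_b by (simp add: algebra_simps)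
  have S1: "{i\<in>{..?w}. ?P1 i} = {u div 2 ..< (2 * u + v + 1) div 3}"
    by (rule Set.set_eqI) (simp only: mem_Collect_eq atMost_iff atLeastLessThan_iff cntl1 cntl2; arith)
  have S2': "{j\<in>{..?w}. v \<le> 2 * j + 1 \<and> 2 * j + 1 - v < ?w - j} = {v div 2 ..< (u + 2 * v + 1) div 3}"
    by (rule Set.set_eqI) (simp only: mem_Collect_eq atMost_iff atLeastLessThan_iff cntl1 cntl2; arith)
  have S2img: "(\<lambda>i. ?w - i) ` {i\<in>{..?w}. ?P2 i} = {j\<in>{..?w}. v \<le> 2 * j + 1 \<and> 2 * j + 1 - v < ?w - j}"
  proof (rule Set.set_eqI, rule iffI)
    fix j assume "j \<in> (\<lambda>i. ?w - i) ` {i\<in>{..?w}. ?P2 i}"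
    then obtain i where "i \<le> ?w" "?P2 i" "j = ?w - i" by auto
    then show "j \<in> {j\<in>{..?w}. v \<le> 2 * j + 1 \<and> 2 * j + 1 - v < ?w - j}" by auto
  next
    fix j assume j: "j \<in> {j\<in>{..?w}. v \<le> 2 * j + 1 \<and> 2 * j + 1 - v < ?w - j}"
    then have "?w - j \<in> {i\<in>{..?w}. ?P2 i}" by auto
    moreover have "j = ?w - (?w - j)" using j by auto
    ultimately show "j \<in> (\<lambda>i. ?w - i) ` {i\<in>{..?w}. ?P2 i}" by blast
  qed
  have inj2: "inj_on (\<lambda>i. ?w - i) {i\<in>{..?w}. ?P2 i}"
    by (rule inj_onI) auto
  have S2: "card {i\<in>{..?w}. ?P2 i} = (u + 2 * v + 1) div 3 - v div 2"
    using card_image[OF inj2] S2img S2' by simp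
  have S3a: "{i\<in>{..?w}. ?P3 i} = {i. 3 * i = 2 * u + v}"
    by (rule Set.set_eqI) (simp; arith)
  have S3: "card {i\<in>{..?w}. ?P3 i} = (if 3 dvd (2 * u + v) then 1 else 0)"
  proof (cases "3 dvd (2 * u + v)")
    case True
    then have "{i. 3 * i = 2 * u + v} = {(2 * u + v) div 3}" by auto
    then show ?thesis using True S3a by simp
  next
    case False
    then have "{i. 3 * i = 2 * u + v} = {}" by (metis (mono_tags) Collect_empty_eq dvd_triv_left)
    then show ?thesis using False S3a by simp
  qed
  have N1: "{i\<in>{..<n}. ?Q1 i} = {(2 * u + v + 2) div 3 ..< (2 * u + v + 1) div 2}"
    using assms by (intro Set.set_eqI) (simp only: mem_Collect_eq lessThan_iff atLeastLessThan_iff cntl3 cntl4; arith)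
  have N2: "{i\<in>{..<n}. ?Q2 i} = {(u + 2 * v + 2) div 3 ..< (u + 2 * v + 1) div 2}"
    using assms by (intro Set.set_eqI) (simp only: mem_Collect_eq lessThan_iff atLeastLessThan_iff cntl3 cntl4; arith)
  have "(\<Sum>i\<le>?w. ecount u v i) = card {i\<in>{..?w}. ?P1 i} + card {i\<in>{..?w}. ?P2 i} + card {i\<in>{..?w}. ?P3 i}"
    unfolding e sum.distrib by (simp add: sum_ind_card)
  moreover have "NG u v n = card {i\<in>{..<n}. ?Q1 i} + card {i\<in>{..<n}. ?Q2 i}"
    unfolding ng sum.distrib by (simp add: sum_ind_card)
  moreover have "card {i\<in>{..<n}. ?Q1 i} + card {i\<in>{..<n}. ?Q2 i} + 1 \<le>
      card {i\<in>{..?w}. ?P1 i} + card {i\<in>{..?w}. ?P2 i} + card {i\<in>{..?w}. ?P3 i}"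
    unfolding S1 S2 S3 N1 N2 card_atLeastLessThan by (rule final_arith)
  ultimately show ?thesis by simp
qed

lemma Mr_polyfun_comp: "polyfun f \<Longrightarrow> polyfun g \<Longrightarrow> polyfun (\<lambda>t. Mr (f t) (g t) i j)"
  unfolding Mr_def by (intro polyfun_mult polyfun_pochhammer ffr_polyfun polyfun_add polyfun_diff polyfun_const polyfun_id) auto

lemma Dr_path:
  assumes wn: "u + v < n"
  shows "dvt (Suc (NG u v n)) (\<lambda>t. Dr (- real u + t) (- real v - t) n)"
  unfolding Dr_def
proof (rule dvt_sum)
  let ?w = "u + v"
  let ?M = "\<lambda>t i j. Mr (- real u + t) (- real v - t) i j"
  fix p assume "p \<in> {p. p permutes {0..<n}}"
  then have p: "p permutes {0..<n}" by simp
  show "dvt (Suc (NG u v n)) (\<lambda>t. of_int (sign p) * (\<Prod>i = 0..<n. ?M t i (p i)))"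
  proof (cases "\<exists>i\<le>?w. ?w - i < p i")
    case True
    then obtain i where i: "i \<le> ?w" "?w - i < p i" by blast
    have "?M t i (p i) = 0" for t
    proof -
      have "pochhammer (- real u + t + (- real v - t) + real i) (p i) = 0"
        unfolding pochhammer_eq_0_iff
        by (rule exI[of _ "?w - i"]) (use i in \<open>auto simp: of_nat_diff\<close>)
      then show ?thesis unfolding Mr_def by simp
    qed
    then have "(\<Prod>i = 0..<n. ?M t i (p i)) = 0" for t
      using i wn by (intro prod_zero) (auto intro!: bexI[of _ i])
    then show ?thesis by (intro dvt_cong[OF _ dvt_zero]) simp
  next
    case False
    then have le: "\<And>i. i \<le> ?w \<Longrightarrow> p i \<le> ?w - i" by (meson not_less)
    have eqp: "\<And>i. i \<le> ?w \<Longrightarrow> p i = ?w - i"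
      by (rule perm_antidiag[OF p wn le])
    have split: "{0..<n} = {..?w} \<union> {Suc ?w..<n}" using wn by auto
    have prodeq: "(\<Prod>i = 0..<n. ?M t i (p i)) =
        (\<Prod>i\<le>?w. ?M t i (?w - i)) * (\<Prod>i = Suc ?w..<n. ?M t i (p i))" for t
    proof -
      have "(\<Prod>i = 0..<n. ?M t i (p i)) = (\<Prod>i\<le>?w. ?M t i (p i)) * (\<Prod>i = Suc ?w..<n. ?M t i (p i))"
        unfolding split by (rule prod.union_disjoint) auto
      moreover have "(\<Prod>i\<le>?w. ?M t i (p i)) = (\<Prod>i\<le>?w. ?M t i (?w - i))"
        using eqp by (intro prod.cong refl) auto
      ultimately show ?thesis by simp
    qed
    have "dvt (0 + ((\<Sum>i\<le>?w. ecount u v i) + 0))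
      (\<lambda>t. of_int (sign p) * ((\<Prod>i\<le>?w. ?M t i (?w - i)) * (\<Prod>i = Suc ?w..<n. ?M t i (p i))))"
      by (intro dvt_mult dvt_polyfun polyfun_const dvt_prod antidiag_entry polyfun_prod Mr_polyfun_comp
          polyfun_add polyfun_diff polyfun_id) auto
    then have "dvt (\<Sum>i\<le>?w. ecount u v i) (\<lambda>t. of_int (sign p) * (\<Prod>i = 0..<n. ?M t i (p i)))"
      unfolding prodeq by simp
    then show ?thesis
      by (rule dvt_mono) (use count_ineq[OF wn] in simp)
  qed
qed

theorem lemma7:
  fixes n u v :: nat and P4 :: "real \<Rightarrow> real \<Rightarrow> real"
  assumes "n \<ge> 1"
    and "bivariate_polynomial P4"
    and "\<forall>x y :: nat. x + y \<ge> 1 \<longrightarrow> E x y n = E_prefactor x y n * P4 (real x) (real y)"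
    and "u + v \<le> n - 1"
  shows "P4 (- real u) (- real v) = 0"
proof -
  have wn: "u + v < n" using assms(1,4) by linarith
  have grid: "Dr (real x) (real y) n = G2 (real x) (real y) n * P4 (real x) (real y)"
    if "x + y \<ge> 1" for x y :: nat
    using grid_identity[OF that] assms(3) that by blast
  have all: "Dr x y n = G2 x y n * P4 x y" for x y
    by (rule extend[OF assms(2) grid])
  have "(\<lambda>t. P4 (- real u + t) (- real v - t)) 0 = 0"
  proof (rule ext_dvt_final[where g = "\<lambda>t. G2 (- real u + t) (- real v - t) n"
        and h = "\<lambda>t. Dr (- real u + t) (- real v - t) n" and N = "NG u v n"])
    show "polyfun (\<lambda>t. P4 (- real u + t) (- real v - t))"
      by (intro bivar_polyfun[OF assms(2)] polyfun_add polyfun_diff polyfun_const polyfun_id)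
    show "ext (NG u v n) (\<lambda>t. G2 (- real u + t) (- real v - t) n)" by (rule G2_path_ext)
    show "dvt (Suc (NG u v n)) (\<lambda>t. Dr (- real u + t) (- real v - t) n)" by (rule Dr_path[OF wn])
    fix t show "P4 (- real u + t) (- real v - t) * G2 (- real u + t) (- real v - t) n =
        Dr (- real u + t) (- real v - t) n" using all by (simp add: mult.commute)
  qed
  then show ?thesis by simp
qed

end
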